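(* Let $q$ be a prime power, $F=\mathbb{F}_{q^2}$, $m\ge1$ with $\gcd(q,m)=1$, and $R=F[x]/\langle x^m-1\rangle$. Let $C\subseteq R^2$ be the quasi-cyclic code generated by one element $(g_{11}(x),g_{12}(x))$, where $g_{11}(x)\mid x^m-1$ and $\deg g_{12}<m$. Let $g(x)=\gcd(g_{11}(x),g_{12}(x))$. Then $C$ is Hermitian LCD if and only if $$\gcd\left(\frac{x^m-1}{g(x)},\ g_{11}(x)\hat g_{11}(x)+g_{12}(x)\hat g_{12}(x)\right)=1.$$
   Context: Elements of $R$ are represented by polynomials of degree $<m$ and identified with their coefficient vectors in $F^m$; a quasi-cyclic code of length $2m$ and index 2 is an $R$-submodule of $R^2$. The Hermitian inner product of $(a_1,a_2),(b_1,b_2)\in R^2$ is $\sum_k a_{1,k}b_{1,k}^q+\sum_k a_{2,k}b_{2,k}^q$, where $a_{i,k},b_{i,k}$ are the coefficients of $x^k$; $C$ is Hermitian LCD if $C\cap C^{\perp_h}=\{0\}$. For $f=\sum f_kx^k\in F[x]$ of degree at most $m$, $\hat f(x)=x^m f^{[q]}(x^{-1})$, where $f^{[q]}=\sum f_k^q x^k$. *)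

theory Defs
  imports "HOL-Computational_Algebra.Computational_Algebra"
begin

definition xm1 :: "nat \<Rightarrow> 'a::comm_ring_1 poly" where
  "xm1 m = monom 1 m - 1"

text \<open>Elements of R = F[x]/(x^m-1), represented by polynomials of degree < m.\<close>
definition Rset :: "nat \<Rightarrow> 'a::field poly set" where
  "Rset m = {p. degree p < m}"

definition qc_code_1gen :: "nat \<Rightarrow> 'a::field poly \<Rightarrow> 'a poly \<Rightarrow> ('a poly \<times> 'a poly) set" where
  "qc_code_1gen m g1 g2 = {((a * g1) mod xm1 m, (a * g2) mod xm1 m) | a. a \<in> Rset m}"

text \<open>Hermitian inner product on R^2 (coefficient vectors in F^m), with conjugation y \<mapsto> y^q.\<close>
definition herm_ip :: "nat \<Rightarrow> nat \<Rightarrow> ('a::field poly \<times> 'a poly) \<Rightarrow> ('a poly \<times> 'a poly) \<Rightarrow> 'a" where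
  "herm_ip q m u v =
     (\<Sum>k<m. coeff (fst u) k * coeff (fst v) k ^ q) + (\<Sum>k<m. coeff (snd u) k * coeff (snd v) k ^ q)"

definition herm_dual :: "nat \<Rightarrow> nat \<Rightarrow> ('a::field poly \<times> 'a poly) set \<Rightarrow> ('a poly \<times> 'a poly) set" where
  "herm_dual q m C = {v. fst v \<in> Rset m \<and> snd v \<in> Rset m \<and> (\<forall>c\<in>C. herm_ip q m c v = 0)}"

definition herm_LCD :: "nat \<Rightarrow> nat \<Rightarrow> ('a::field poly \<times> 'a poly) set \<Rightarrow> bool" where
  "herm_LCD q m C \<longleftrightarrow> C \<inter> herm_dual q m C = {(0, 0)}"

text \<open>hat f = x^m f^[q](x^{-1}) for deg f \<le> m: coefficient k is (f_{m-k})^q for k \<le> m.\<close>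
definition hat_poly :: "nat \<Rightarrow> nat \<Rightarrow> 'a::field poly \<Rightarrow> 'a poly" where
  "hat_poly q m f = (\<Sum>k\<le>m. monom (coeff f (m - k) ^ q) k)"

definition prime_power :: "nat \<Rightarrow> bool" where
  "prime_power q \<longleftrightarrow> (\<exists>p k. prime p \<and> k > 0 \<and> q = p ^ k)"

end

theory Submission imports Defs "HOL-Number_Theory.Residues" begin
hide_const (open) up_ring.coeff up_ring.monom module.smult


locale hs =
  fixes q m :: nat and phi :: "'a::{finite,field_gcd} \<Rightarrow> 'a"
  assumes phi_def: "phi = (\<lambda>c. c ^ q)"
  and q_pos: "q > 0" and m_pos: "m \<ge> 1"
  and fadd: "\<And>x y::'a. (x + y) ^ q = x ^ q + y ^ q"
  and finv: "\<And>x::'a. (x ^ q) ^ q = x"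
  and mnz: "of_nat m \<noteq> (0::'a)"
begin

abbreviation "M \<equiv> (xm1 m :: 'a poly)"

lemma phi0[simp]: "phi 0 = 0" using q_pos by (simp add: phi_def)
lemma phi1[simp]: "phi 1 = 1" by (simp add: phi_def)
lemma phi_add: "phi (x + y) = phi x + phi y" by (simp add: phi_def fadd)
lemma phi_mult: "phi (x * y) = phi x * phi y" by (simp add: phi_def power_mult_distrib)
lemma phi_minus: "phi (- x) = - phi x"
proof -
  have "phi (x + - x) = 0" by simp
  then show ?thesis by (simp only: phi_add) (simp add: eq_neg_iff_add_eq_0 add.commute)
qed
lemma phi_phi[simp]: "phi (phi x) = x" by (simp add: phi_def finv)
lemma phi_sum: "phi (sum f A) = sum (\<lambda>i. phi (f i)) A"
  by (induction A rule: infinite_finite_induct) (auto simp: phi_add)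
lemma phi_eq0[simp]: "phi x = 0 \<longleftrightarrow> x = 0" using q_pos by (simp add: phi_def)

definition cj :: "'a poly \<Rightarrow> 'a poly" where "cj f = map_poly phi f"

lemma coeff_cj[simp]: "coeff (cj f) n = phi (coeff f n)"
  by (simp add: cj_def coeff_map_poly)
lemma cj_add: "cj (f + g) = cj f + cj g"
  by (rule poly_eqI) (simp add: phi_add)
lemma cj_mult: "cj (f * g) = cj f * cj g"
  by (rule poly_eqI) (simp add: coeff_mult phi_sum phi_mult)
lemma cj_monom: "cj (monom c n) = monom (phi c) n"
  by (simp add: cj_def map_poly_monom)
lemma cj_0[simp]: "cj 0 = 0" by (simp add: cj_def)

definition tau :: "'a poly \<Rightarrow> 'a poly" where
  "tau f = pcompose (cj f) (monom 1 (m - 1))"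

lemma tau_add: "tau (f + g) = tau f + tau g"
  by (simp add: tau_def cj_add pcompose_add)
lemma tau_mult: "tau (f * g) = tau f * tau g"
  by (simp add: tau_def cj_mult pcompose_mult)
lemma tau_0[simp]: "tau 0 = 0" by (simp add: tau_def)
lemma tau_sum: "tau (sum f A) = sum (\<lambda>i. tau (f i)) A"
  by (induction A rule: infinite_finite_induct) (auto simp: tau_add)
lemma tau_monom: "tau (monom c n) = monom (phi c) (n * (m - 1))"
proof -
  have "pcompose (monom d n) r = smult d (r ^ n)" for d and r :: "'a poly"
  proof -
    have "pcompose ([:0,1:]^n) r = r ^ n" for n
      by (induction n) (simp_all add: pcompose_pCons pcompose_1)
    then show ?thesis by (simp add: monom_altdef pcompose_smult)
  qed
  then show ?thesis
    by (simp add: tau_def cj_monom monom_power mult.commute smult_monom)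
qed

lemma tau_minus: "tau (- f) = - tau f"
proof -
  have "tau f + tau (-f) = 0" using tau_add[of f "-f"] by simp
  then show ?thesis by (metis neg_eq_iff_add_eq_0)
qed
lemma tau_diff: "tau (f - g) = tau f - tau g"
  using tau_add[of f "-g"] tau_minus[of g] by simp
lemma tau_1: "tau 1 = 1"
  using tau_monom[of 1 0] by (simp add: monom_0 one_pCons)

lemma nat_mod_eqI: "int m dvd int a - int b \<Longrightarrow> a mod m = b mod m"
  by (metis cong_iff_dvd_diff cong_int_iff cong_def)

lemma M_eq: "M = monom 1 m - 1" by (simp add: xm1_def)
lemma degree_M: "degree M = m"
proof -
  have "M = monom 1 m + (- 1)" by (simp add: M_eq)
  also have "degree \<dots> = m" using m_pos by (subst degree_add_eq_left) (auto simp: degree_monom_eq)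
  finally show ?thesis .
qed
lemma M_nz: "M \<noteq> 0"
  using degree_M m_pos by auto

lemma xdvd: "m dvd t \<Longrightarrow> M dvd (monom 1 t - 1)"
proof -
  assume "m dvd t"
  then obtain s where t: "t = m * s" by auto
  have "monom (1::'a) t - 1 = (monom 1 m) ^ s - 1" by (simp add: monom_power t)
  also have "\<dots> = (monom 1 m - 1) * (\<Sum>i<s. (monom 1 m)^i)" by (rule power_diff_1_eq)
  finally show ?thesis by (simp add: M_eq)
qed

lemma monom_cong: "a mod m = b mod m \<Longrightarrow> monom c a mod M = monom c b mod M"
proof -
  have *: "monom c a mod M = monom c b mod M" if "a mod m = b mod m" "b \<le> a" for a b
  proof -
    have "m dvd a - b" using that by (simp add: mod_eq_dvd_iff_nat)
    then have "M dvd monom 1 (a - b) - 1" by (rule xdvd)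
    then have "M dvd monom c b * (monom 1 (a - b) - 1)" by simp
    also have "monom c b * (monom 1 (a - b) - 1) = monom c a - monom c b"
      using that(2) by (simp add: algebra_simps mult_monom)
    finally show ?thesis by (simp add: mod_eq_dvd_iff)
  qed
  assume "a mod m = b mod m"
  then show ?thesis using *[of a b] *[of b a] by (cases "b \<le> a") auto
qed

lemma tau_M: "M dvd tau M"
proof -
  have "tau M = monom 1 (m * (m - 1)) - 1"
    by (simp add: M_eq tau_diff tau_monom tau_1)
  then show ?thesis using xdvd[of "m * (m - 1)"] by simp
qed

lemma tau_cong: "f mod M = g mod M \<Longrightarrow> tau f mod M = tau g mod M"
proof -
  assume "f mod M = g mod M"
  then obtain k where "f - g = M * k" by (auto simp: mod_eq_dvd_iff)
  then have "tau f - tau g = tau M * tau k" by (simp add: tau_diff[symmetric] tau_mult)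
  then have "M dvd tau f - tau g" using tau_M by simp
  then show ?thesis by (simp add: mod_eq_dvd_iff)
qed

lemma tau_tau: "tau (tau f) mod M = f mod M"
proof -
  have f: "f = (\<Sum>i\<le>degree f. monom (coeff f i) i)" by (simp add: poly_as_sum_of_monoms)
  have "tau (tau f) = (\<Sum>i\<le>degree f. monom (coeff f i) (i * (m - 1) * (m - 1)))"
    by (subst f) (simp add: tau_sum tau_monom)
  also have "\<dots> mod M = (\<Sum>i\<le>degree f. monom (coeff f i) (i * (m - 1) * (m - 1)) mod M) mod M"
    by (simp add: mod_sum_eq)
  also have "(\<Sum>i\<le>degree f. monom (coeff f i) (i * (m - 1) * (m - 1)) mod M)
     = (\<Sum>i\<le>degree f. monom (coeff f i) i mod M)"
  proof (rule sum.cong[OF refl], rule monom_cong, rule nat_mod_eqI)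
    fix i
    have e: "int (m - 1) = int m - 1" using m_pos by simp
    have "int (i * (m - 1) * (m - 1)) - int i = int i * (int m - 1) * (int m - 1) - int i"
      by (simp only: of_nat_mult e)
    also have "\<dots> = int m * (int i * (int m - 2))" by (simp add: algebra_simps)
    finally have "int (i * (m - 1) * (m - 1)) - int i = int m * (int i * (int m - 2))" .
    then show "int m dvd int (i * (m - 1) * (m - 1)) - int i" by simp
  qed
  also have "(\<Sum>i\<le>degree f. monom (coeff f i) i mod M) mod M = f mod M"
    by (simp add: mod_sum_eq poly_as_sum_of_monoms)
  finally show ?thesis .
qed

lemma hat_tau: "degree f \<le> m \<Longrightarrow> hat_poly q m f mod M = tau f mod M"
proof -
  assume deg: "degree f \<le> m"
  have "hat_poly q m f = (\<Sum>j\<le>m. monom (phi (coeff f j)) (m - j))"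
    unfolding hat_poly_def phi_def
    by (rule sum.reindex_bij_witness[of _ "\<lambda>j. m - j" "\<lambda>j. m - j"]) auto
  also have "\<dots> mod M = (\<Sum>j\<le>m. monom (phi (coeff f j)) (m - j) mod M) mod M"
    by (simp add: mod_sum_eq)
  also have "(\<Sum>j\<le>m. monom (phi (coeff f j)) (m - j) mod M)
      = (\<Sum>j\<le>m. monom (phi (coeff f j)) (j * (m - 1)) mod M)"
  proof (rule sum.cong[OF refl], rule monom_cong, rule nat_mod_eqI)
    fix j assume "j \<in> {..m}"
    then have e1: "int (m - j) = int m - int j" by simp
    have e: "int (m - 1) = int m - 1" using m_pos by simp
    have "int (m - j) - int (j * (m - 1)) = int m - int j - int j * (int m - 1)"
      by (simp only: of_nat_mult e e1)
    also have "\<dots> = int m * (1 - int j)" by (simp add: algebra_simps)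
    finally have "int (m - j) - int (j * (m - 1)) = int m * (1 - int j)" .
    then show "int m dvd int (m - j) - int (j * (m - 1))" by simp
  qed
  also have "(\<Sum>j\<le>m. monom (phi (coeff f j)) (j * (m - 1)) mod M) mod M = tau f mod M"
    by (subst (2) poly_as_sum_of_monoms'[OF deg, symmetric]) (simp add: mod_sum_eq tau_sum tau_monom)
  finally show ?thesis .
qed


definition Lf :: "'a poly \<Rightarrow> 'a" where "Lf f = coeff (f mod M) 0"

lemma Lf_cong: "f mod M = g mod M \<Longrightarrow> Lf f = Lf g" by (simp add: Lf_def)
lemma Lf_add: "Lf (f + g) = Lf f + Lf g" by (simp add: Lf_def poly_mod_add_left)
lemma Lf_0[simp]: "Lf 0 = 0" by (simp add: Lf_def)
lemma Lf_sum: "Lf (sum f A) = (\<Sum>i\<in>A. Lf (f i))"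
  by (induction A rule: infinite_finite_induct) (auto simp: Lf_add)
lemma Lf_monom: "Lf (monom c n) = (if m dvd n then c else 0)"
proof -
  have "monom c n mod M = monom c (n mod m) mod M" by (rule monom_cong) simp
  also have "\<dots> = monom c (n mod m)"
  proof (cases "c = 0")
    case False
    then show ?thesis using m_pos by (intro mod_poly_less) (simp add: degree_M degree_monom_eq)
  qed simp
  finally show ?thesis by (simp add: Lf_def dvd_eq_mod_eq_0)
qed

lemma sum_monoms_lt: "degree p < m \<Longrightarrow> (\<Sum>i<m. monom (coeff p i) i) = p"
  by (rule poly_eqI) (auto simp: coeff_sum coeff_eq_0)

lemma dvd_iff_eq: "i < m \<Longrightarrow> j < m \<Longrightarrow> m dvd (i + j * (m - 1)) \<longleftrightarrow> i = j"
proof -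
  assume ij: "i < m" "j < m"
  have e: "int (m - 1) = int m - 1" using m_pos by simp
  have "int (i + j * (m - 1)) = (int i - int j) + int m * int j"
    by (simp only: of_nat_add of_nat_mult e) (simp add: algebra_simps)
  have "m dvd (i + j * (m - 1)) \<longleftrightarrow> int m dvd int (i + j * (m - 1))"
    by (simp only: of_nat_dvd_iff)
  also have "\<dots> \<longleftrightarrow> int m dvd (int i - int j) + int m * int j" by (simp only: \<open>int (i + j * (m - 1)) = _\<close>)
  also have "\<dots> \<longleftrightarrow> int m dvd (int i - int j)" by (simp add: dvd_add_left_iff)
  also have "\<dots> \<longleftrightarrow> i = j"
  proof
    assume "int m dvd int i - int j"
    then obtain t where t: "int i - int j = int m * t" by auto
    show "i = j"
    proof (rule ccontr)
      assume "i \<noteq> j"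
      then have "t \<noteq> 0" using t by auto
      then have "\<bar>int m * t\<bar> \<ge> int m" by (simp add: abs_mult mult_le_cancel_left1) (use abs_ge_self[of t] in linarith)
      then show False using t ij by linarith
    qed
  qed simp
  finally show ?thesis .
qed

lemma ip_formula:
  assumes "degree a < m" "degree b < m"
  shows "Lf (a * tau b) = (\<Sum>k<m. coeff a k * coeff b k ^ q)"
proof -
  have "a * tau b = (\<Sum>i<m. monom (coeff a i) i) * tau (\<Sum>j<m. monom (coeff b j) j)"
    using sum_monoms_lt[OF assms(1)] sum_monoms_lt[OF assms(2)] by simp
  also have "\<dots> = (\<Sum>i<m. \<Sum>j<m. monom (coeff a i * phi (coeff b j)) (i + j * (m - 1)))"
    by (simp add: tau_sum tau_monom sum_product mult_monom)
  finally have "Lf (a * tau b) = (\<Sum>i<m. \<Sum>j<m. if m dvd (i + j * (m - 1)) then coeff a i * phi (coeff b j) else 0)"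
    by (simp add: Lf_sum Lf_monom)
  also have "\<dots> = (\<Sum>i<m. \<Sum>j<m. if i = j then coeff a i * phi (coeff b j) else 0)"
    by (intro sum.cong refl) (use dvd_iff_eq in auto)
  also have "\<dots> = (\<Sum>k<m. coeff a k * coeff b k ^ q)"
    by (simp add: phi_def)
  finally show ?thesis .
qed


lemma deg_mod: "degree (f mod M) < m"
  using degree_mod_less[OF M_nz, of f] m_pos degree_M by auto

lemma dvd_mod_diff: "M dvd (f mod M - f)"
  by (simp add: mod_eq_dvd_iff[symmetric])

lemma nondeg:
  assumes "\<And>a. degree a < m \<Longrightarrow> Lf (a * w) = 0"
  shows "M dvd w"
proof -
  define b where "b = tau w mod M"
  have db: "degree b < m" by (simp add: b_def deg_mod)
  have tb: "tau b mod M = w mod M"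
    unfolding b_def using tau_cong[of "tau w mod M" "tau w"] tau_tau[of w] by simp
  have "coeff b i = 0" for i
  proof (cases "i < m")
    case True
    have dm: "degree (monom (1::'a) i) < m" using True by (simp add: degree_monom_eq)
    have "Lf (monom 1 i * w) = Lf (monom 1 i * tau b)"
      by (rule Lf_cong, rule mod_mult_cong) (simp_all add: tb)
    also have "\<dots> = (\<Sum>k<m. coeff (monom 1 i) k * coeff b k ^ q)"
      by (rule ip_formula[OF dm db])
    also have "\<dots> = (\<Sum>k<m. if k = i then coeff b k ^ q else 0)"
      by (rule sum.cong) auto
    also have "\<dots> = coeff b i ^ q" using True by simp
    finally have "coeff b i ^ q = 0" using assms[OF dm] by simp
    then show ?thesis using q_pos by simp
  next
    case False
    then show ?thesis using db by (simp add: coeff_eq_0)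
  qed
  then have "b = 0" by (simp add: poly_eqI)
  then have "w mod M = 0" using tb by simp
  then show ?thesis by (simp add: mod_eq_0_iff_dvd)
qed

lemma herm_ip_eq:
  assumes "degree (fst u) < m" "degree (snd u) < m" "degree (fst v) < m" "degree (snd v) < m"
  shows "herm_ip q m u v = Lf (fst u * tau (fst v) + snd u * tau (snd v))"
  using assms by (simp add: herm_ip_def Lf_add ip_formula)

lemma dual_iff:
  assumes "degree v1 < m" "degree v2 < m"
  shows "(\<forall>c\<in>qc_code_1gen m g11 g12. herm_ip q m c (v1, v2) = 0) \<longleftrightarrow>
         M dvd (g11 * tau v1 + g12 * tau v2)"
proof -
  let ?w = "g11 * tau v1 + g12 * tau v2"
  have key: "herm_ip q m ((a * g11) mod M, (a * g12) mod M) (v1, v2) = Lf (a * ?w)" for a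
  proof -
    have "herm_ip q m ((a * g11) mod M, (a * g12) mod M) (v1, v2)
        = Lf ((a * g11) mod M * tau v1 + (a * g12) mod M * tau v2)"
      using herm_ip_eq[of "((a * g11) mod M, (a * g12) mod M)" "(v1, v2)"] assms by (simp add: deg_mod)
    also have "\<dots> = Lf (a * ?w)"
    proof (rule Lf_cong)
      have "(a * g11) mod M * tau v1 + (a * g12) mod M * tau v2 - a * ?w
         = ((a * g11) mod M - a * g11) * tau v1 + ((a * g12) mod M - a * g12) * tau v2"
        by (simp add: algebra_simps)
      moreover have "M dvd \<dots>" by (intro dvd_add dvd_mult2 dvd_mod_diff)
      ultimately show "((a * g11) mod M * tau v1 + (a * g12) mod M * tau v2) mod M = (a * ?w) mod M"
        by (simp add: mod_eq_dvd_iff)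
    qed
    finally show ?thesis .
  qed
  show ?thesis
  proof
    assume H: "\<forall>c\<in>qc_code_1gen m g11 g12. herm_ip q m c (v1, v2) = 0"
    show "M dvd ?w"
    proof (rule nondeg)
      fix a :: "'a poly" assume "degree a < m"
      then have "((a * g11) mod M, (a * g12) mod M) \<in> qc_code_1gen m g11 g12"
        by (auto simp: qc_code_1gen_def Rset_def)
      then show "Lf (a * ?w) = 0" using H key by metis
    qed
  next
    assume "M dvd ?w"
    then have "Lf (a * ?w) = 0" for a
      using Lf_cong[of "a * ?w" 0] by (simp add: mod_eq_0_iff_dvd)
    then show "\<forall>c\<in>qc_code_1gen m g11 g12. herm_ip q m c (v1, v2) = 0"
      by (auto simp: qc_code_1gen_def key)
  qed
qed


lemma dvd_tau: "M dvd f \<Longrightarrow> M dvd tau f"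
  using tau_cong[of f 0] by (simp add: mod_eq_0_iff_dvd)

lemma lcd_iff:
  fixes g11 g12 :: "'a poly"
  assumes g11M: "g11 dvd M"
  defines "g \<equiv> gcd g11 g12" and "D \<equiv> M div gcd g11 g12"
    and "h \<equiv> g11 * tau g11 + g12 * tau g12"
  shows "herm_LCD q m (qc_code_1gen m g11 g12) \<longleftrightarrow> (\<forall>r. M dvd r * h \<longrightarrow> D dvd r)"
proof -
  have g11nz: "g11 \<noteq> 0" using g11M M_nz by auto
  have gnz: "g \<noteq> 0" using g11nz by (simp add: g_def)
  have gM: "g dvd M" using g11M by (simp add: g_def dvd_trans[OF gcd_dvd1])
  have MDg: "M = D * g" using gM by (simp add: D_def g_def)
  have stepb: "(M dvd a * g11 \<and> M dvd a * g12) \<longleftrightarrow> D dvd a" for a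
  proof -
    have "(M dvd a * g11 \<and> M dvd a * g12) \<longleftrightarrow> M dvd gcd (a * g11) (a * g12)" by simp
    also have "\<dots> \<longleftrightarrow> M dvd a * g" by (simp add: gcd_mult_left g_def)
    also have "\<dots> \<longleftrightarrow> D dvd a" using gnz by (simp add: MDg)
    finally show ?thesis .
  qed
  have th: "tau h mod M = h mod M"
  proof -
    have "tau h = tau g11 * tau (tau g11) + tau g12 * tau (tau g12)"
      by (simp add: h_def tau_add tau_mult)
    also have "\<dots> mod M = (tau g11 * g11 + tau g12 * g12) mod M"
      by (intro mod_add_cong mod_mult_cong refl tau_tau)
    finally show ?thesis by (simp add: h_def mult.commute)
  qed
  have stepd: "M dvd tau a * h \<longleftrightarrow> M dvd a * h" for a
  proof
    assume "M dvd tau a * h"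
    then have "M dvd tau (tau a * h)" by (rule dvd_tau)
    moreover have "tau (tau a * h) mod M = (a * h) mod M"
      by (simp only: tau_mult) (intro mod_mult_cong tau_tau th)
    ultimately show "M dvd a * h" by (simp add: mod_eq_0_iff_dvd[symmetric])
  next
    assume "M dvd a * h"
    then have "M dvd tau (a * h)" by (rule dvd_tau)
    moreover have "tau (a * h) mod M = (tau a * h) mod M"
      by (simp only: tau_mult) (intro mod_mult_cong refl th)
    ultimately show "M dvd tau a * h" by (simp add: mod_eq_0_iff_dvd[symmetric])
  qed
  have elem: "M dvd (g11 * tau ((a * g11) mod M) + g12 * tau ((a * g12) mod M)) \<longleftrightarrow> M dvd a * h" for a
  proof -
    have "(g11 * tau ((a * g11) mod M) + g12 * tau ((a * g12) mod M)) mod M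
        = (g11 * tau (a * g11) + g12 * tau (a * g12)) mod M"
      by (intro mod_add_cong mod_mult_cong refl tau_cong) simp_all
    also have "g11 * tau (a * g11) + g12 * tau (a * g12) = tau a * h"
      by (simp add: h_def tau_mult algebra_simps)
    finally show ?thesis using stepd[of a] by (simp add: mod_eq_0_iff_dvd[symmetric])
  qed
  let ?C = "qc_code_1gen m g11 g12"
  have mem: "x \<in> ?C \<inter> herm_dual q m ?C \<longleftrightarrow>
     (\<exists>a. degree a < m \<and> x = ((a * g11) mod M, (a * g12) mod M) \<and> M dvd a * h)" for x
  proof
    assume "x \<in> ?C \<inter> herm_dual q m ?C"
    then obtain a where a: "degree a < m" "x = ((a * g11) mod M, (a * g12) mod M)"
      and d: "\<forall>c\<in>?C. herm_ip q m c ((a * g11) mod M, (a * g12) mod M) = 0"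
      by (auto simp: qc_code_1gen_def Rset_def herm_dual_def)
    then have "M dvd a * h" using dual_iff[of "(a * g11) mod M" "(a * g12) mod M" g11 g12] elem[of a]
      by (simp add: deg_mod)
    then show "\<exists>a. degree a < m \<and> x = ((a * g11) mod M, (a * g12) mod M) \<and> M dvd a * h"
      using a by blast
  next
    assume "\<exists>a. degree a < m \<and> x = ((a * g11) mod M, (a * g12) mod M) \<and> M dvd a * h"
    then obtain a where a: "degree a < m" "x = ((a * g11) mod M, (a * g12) mod M)" "M dvd a * h"
      by blast
    have "x \<in> ?C" using a by (auto simp: qc_code_1gen_def Rset_def)
    moreover have "x \<in> herm_dual q m ?C"
      using a dual_iff[of "(a * g11) mod M" "(a * g12) mod M" g11 g12] elem[of a]
      by (auto simp: herm_dual_def Rset_def deg_mod)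
    ultimately show "x \<in> ?C \<inter> herm_dual q m ?C" by blast
  qed
  have e: "herm_LCD q m ?C \<longleftrightarrow> (\<forall>a. degree a < m \<longrightarrow> M dvd a * h \<longrightarrow> D dvd a)"
  proof
    assume L: "herm_LCD q m ?C"
    show "\<forall>a. degree a < m \<longrightarrow> M dvd a * h \<longrightarrow> D dvd a"
    proof (intro allI impI)
      fix a :: "'a poly" assume "degree a < m" "M dvd a * h"
      then have "((a * g11) mod M, (a * g12) mod M) \<in> ?C \<inter> herm_dual q m ?C"
        using mem by blast
      then have "(a * g11) mod M = 0 \<and> (a * g12) mod M = 0" using L by (auto simp: herm_LCD_def)
      then show "D dvd a" using stepb[of a] by (simp add: mod_eq_0_iff_dvd)
    qed
  next
    assume R: "\<forall>a. degree a < m \<longrightarrow> M dvd a * h \<longrightarrow> D dvd a"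
    have "?C \<inter> herm_dual q m ?C \<subseteq> {(0, 0)}"
    proof
      fix x assume "x \<in> ?C \<inter> herm_dual q m ?C"
      then obtain a where a: "degree a < m" "x = ((a * g11) mod M, (a * g12) mod M)" "M dvd a * h"
        using mem by blast
      then have "D dvd a" using R by blast
      then show "x \<in> {(0, 0)}" using stepb[of a] a by (simp add: mod_eq_0_iff_dvd)
    qed
    moreover have "(0, 0) \<in> ?C \<inter> herm_dual q m ?C"
      using mem[of "(0,0)"] m_pos by (intro iffD2[OF mem] exI[of _ 0]) auto
    ultimately show "herm_LCD q m ?C" by (auto simp: herm_LCD_def)
  qed
  have f: "(\<forall>a. degree a < m \<longrightarrow> M dvd a * h \<longrightarrow> D dvd a) \<longleftrightarrow> (\<forall>r. M dvd r * h \<longrightarrow> D dvd r)"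
  proof
    assume R: "\<forall>a. degree a < m \<longrightarrow> M dvd a * h \<longrightarrow> D dvd a"
    show "\<forall>r. M dvd r * h \<longrightarrow> D dvd r"
    proof (intro allI impI)
      fix r :: "'a poly" assume "M dvd r * h"
      moreover have "(r mod M * h) mod M = (r * h) mod M" by (intro mod_mult_cong) simp_all
      ultimately have "M dvd (r mod M) * h" by (simp add: mod_eq_0_iff_dvd[symmetric])
      then have "D dvd r mod M" using R deg_mod by blast
      moreover have "D dvd M * (r div M)" using MDg by simp
      ultimately have "D dvd r mod M + M * (r div M)" by (rule dvd_add)
      then show "D dvd r" by (simp add: add.commute)
    qed
  qed blast
  show ?thesis using e f by simp
qed


lemma pderiv_M: "pderiv M = monom (of_nat m) (m - 1)"
  by (simp add: M_eq pderiv_diff pderiv_monom)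

lemma sqfree: "t * t dvd M \<Longrightarrow> is_unit t"
proof -
  assume "t * t dvd M"
  then obtain k where k: "M = t * t * k" by auto
  have "pderiv M = t * (pderiv t * k + pderiv (t * k))"
    by (simp add: k pderiv_mult algebra_simps)
  then have t1: "t dvd pderiv M" by simp
  have t2: "t dvd M" using k by simp
  have p1: "monom 1 1 * pderiv M = monom (of_nat m) m"
    using m_pos by (simp add: pderiv_M mult_monom)
  have "monom 1 1 * pderiv M - smult (of_nat m) M = [:of_nat m:]"
    unfolding p1 by (simp add: M_eq smult_diff_right smult_monom monom_0)
  moreover have "t dvd monom 1 1 * pderiv M - smult (of_nat m) M"
    using t1 t2 by (intro dvd_diff dvd_mult dvd_smult)
  ultimately have "t dvd [:of_nat m:]" by simp
  moreover have "is_unit [:(of_nat m :: 'a):]" using mnz by (subst is_unit_const_poly_iff) (simp add: dvd_field_iff)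
  ultimately show "is_unit t" by (rule dvd_unit_imp_unit)
qed

lemma final_equiv:
  fixes g h :: "'a poly"
  assumes gM: "g dvd M"
  defines "D \<equiv> M div g"
  shows "(\<forall>r. M dvd r * h \<longrightarrow> D dvd r) \<longleftrightarrow> coprime D h"
proof
  have gnz: "g \<noteq> 0" using gM M_nz by auto
  have MDg: "M = D * g" using gM by (simp add: D_def)
  have Dnz: "D \<noteq> 0" using MDg M_nz by auto
  assume R: "\<forall>r. M dvd r * h \<longrightarrow> D dvd r"
  define d where "d = gcd D h"
  have dnz: "d \<noteq> 0" using Dnz by (simp add: d_def)
  have dD: "d dvd D" and dh: "d dvd h" by (simp_all add: d_def)
  obtain D' where D': "D = d * D'" using dD by auto
  obtain h' where h': "h = d * h'" using dh by auto
  have "M div d * h = M * h'"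
    using dnz by (simp add: MDg D' h' algebra_simps)
  then have "M dvd M div d * h" by simp
  then have "D dvd M div d" using R by blast
  moreover have "M div d = D' * g" using dnz by (simp add: MDg D' algebra_simps)
  ultimately have "d * D' dvd g * D'" using D' by (simp add: mult.commute)
  moreover have "D' \<noteq> 0" using Dnz D' by auto
  ultimately have "d dvd g" by simp
  then have "d * d dvd D * g" using dD by (intro mult_dvd_mono)
  then have "is_unit d" using MDg sqfree by simp
  then show "coprime D h" by (metis d_def is_unit_gcd)
next
  have MDg: "M = D * g" using gM by (simp add: D_def)
  assume c: "coprime D h"
  show "\<forall>r. M dvd r * h \<longrightarrow> D dvd r"
  proof (intro allI impI)
    fix r assume "M dvd r * h"
    then have "D dvd r * h" using MDg by (metis dvd_mult_left)
    then show "D dvd r" using c by (simp add: coprime_dvd_mult_left_iff)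
  qed
qed

lemma main:
  fixes g11 g12 :: "'a poly"
  assumes g11M: "g11 dvd M" and g12: "degree g12 < m"
  shows "herm_LCD q m (qc_code_1gen m g11 g12) \<longleftrightarrow>
    gcd (M div gcd g11 g12) (g11 * hat_poly q m g11 + g12 * hat_poly q m g12) = 1"
proof -
  let ?g = "gcd g11 g12"
  let ?D = "M div ?g"
  let ?h = "g11 * tau g11 + g12 * tau g12"
  let ?H = "g11 * hat_poly q m g11 + g12 * hat_poly q m g12"
  have gM: "?g dvd M" using g11M by (metis dvd_trans gcd_dvd1)
  have d11: "degree g11 \<le> m" using dvd_imp_degree_le[OF g11M M_nz] degree_M by simp
  have "M dvd ?H - ?h"
  proof -
    have "?H - ?h = g11 * (hat_poly q m g11 - tau g11) + g12 * (hat_poly q m g12 - tau g12)"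
      by (simp add: algebra_simps)
    moreover have "M dvd hat_poly q m g11 - tau g11" "M dvd hat_poly q m g12 - tau g12"
      using hat_tau[OF d11] hat_tau[of g12] g12 by (simp_all add: mod_eq_dvd_iff)
    ultimately show ?thesis by simp
  qed
  then have "?D dvd ?H - ?h" using gM by (metis dvd_trans dvd_div_mult_self dvd_triv_left)
  then obtain k where k: "?H - ?h = k * ?D" by (metis dvdE mult.commute)
  have "gcd ?D ?H = gcd ?D (k * ?D + ?h)" using k by (metis add_diff_cancel_left' diff_add_cancel add.commute)
  also have "\<dots> = gcd ?D ?h" by (rule gcd_add_mult)
  finally have "gcd ?D ?H = 1 \<longleftrightarrow> coprime ?D ?h" by (simp add: coprime_iff_gcd_eq_1)
  moreover have "herm_LCD q m (qc_code_1gen m g11 g12) \<longleftrightarrow> coprime ?D ?h"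
    using lcd_iff[OF g11M] final_equiv[OF gM, of ?h] by simp
  ultimately show ?thesis by simp
qed

end

lemma power_card_same:
  fixes x :: "'a :: {finite,field}"
  shows "x ^ card (UNIV :: 'a set) = x"
proof (cases "x = 0")
  case False
  have "x * (\<Prod>y\<in>UNIV-{0}. x * y) = x * x ^ (card (UNIV :: 'a set) - 1) * \<Prod>(UNIV-{0})"
    by (simp add: prod.distrib mult_ac)
  also have "x * x ^ (card (UNIV :: 'a set) - 1) = x ^ Suc (card (UNIV :: 'a set) - 1)"
    by (subst power_Suc) auto
  also have "Suc (card (UNIV :: 'a set) - 1) = card (UNIV :: 'a set)"
    using finite_UNIV_card_ge_0[where ?'a = 'a] by simp
  also have "(\<Prod>y\<in>UNIV-{0}. x * y) = (\<Prod>y\<in>UNIV-{0}. y)"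
    by (rule prod.reindex_bij_witness[of _ "\<lambda>y. y / x" "\<lambda>y. x * y"]) (use False in auto)
  finally show ?thesis
    by simp
qed (use finite_UNIV_card_ge_0[where ?'a = 'a] in auto)

theorem theorem6p4:
  fixes q m :: nat and g11 g12 :: "'a::{finite,field_gcd} poly"
  assumes "prime_power q"
    and "card (UNIV :: 'a set) = q ^ 2"
    and "m \<ge> 1"
    and "coprime q m"
    and "g11 dvd xm1 m"
    and "degree g12 < m"
  shows "herm_LCD q m (qc_code_1gen m g11 g12) \<longleftrightarrow>
    gcd (xm1 m div gcd g11 g12)
        (g11 * hat_poly q m g11 + g12 * hat_poly q m g12) = 1"
proof -
  obtain p k where p: "prime p" "k > 0" "q = p ^ k" using assms(1) by (auto simp: prime_power_def)
  have cpos: "CHAR('a) > 0" by (rule finite_imp_CHAR_pos) simp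
  have cpr: "prime CHAR('a)" using cpos by (rule prime_CHAR_semidom)
  have "CHAR('a) dvd card (UNIV :: 'a set)" by (rule CHAR_dvd_CARD)
  then have "CHAR('a) dvd p ^ (k * 2)" using assms(2) p by (simp add: power_mult)
  then have "CHAR('a) dvd p" using cpr by (rule prime_dvd_power[rotated])
  then have cp: "CHAR('a) = p" using cpr p(1) primes_dvd_imp_eq by blast
  interpret hs q m "\<lambda>c::'a. c ^ q"
  proof
    show "q > 0" using p prime_gt_0_nat by simp
    show "1 \<le> m" by (rule assms(3))
    show "(x + y) ^ q = x ^ q + y ^ q" for x y :: 'a
      by (rule freshmans_dream'[OF cpr]) (simp add: cp p)
    show "(x ^ q) ^ q = x" for x :: 'a
      using power_card_same[of x] assms(2) by (simp add: power_mult[symmetric] power2_eq_square)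
    show "of_nat m \<noteq> (0::'a)"
    proof
      assume "of_nat m = (0::'a)"
      then have "p dvd m" using cp by (simp add: of_nat_eq_0_iff_char_dvd)
      moreover have "p dvd q" using p by simp
      ultimately have "p dvd gcd q m" by simp
      moreover have "gcd q m = 1" using assms(4) by (simp add: coprime_iff_gcd_eq_1)
      ultimately have "p dvd 1" by simp
      then show False using p(1) by simp
    qed
  qed simp
  show ?thesis using main[OF assms(5) assms(6)] .
qed

end
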